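(* Suppose that $d(p_{r+1}^2) \le 2p_r$ for every $r \ge 1$. Then Legendre's conjecture holds: for every natural number $n \ge 1$ there is a prime strictly between $n^2$ and $(n+1)^2$.
   Context: $p_k$ denotes the $k$-th prime ($p_1=2$, $p_2=3$, \dots). For $r \ge 1$, $d(p_{r+1}^2)$ denotes the maximum of $q'-q$ over all pairs of consecutive primes $q<q'$ with $p_{r+1} \le q < q' \le p_{r+1}^2$ (equivalently, the maximum gap between consecutive integers coprime to $p_r\# = \prod_{i\le r} p_i$ lying in the interval $[p_{r+1}, p_{r+1}^2]$). *)

theory Defs
  imports "HOL-Computational_Algebra.Primes"
begin

text \<open>The k-th prime, 1-indexed: nth_prime 1 = 2, nth_prime 2 = 3, ...\<close>
definition nth_prime :: "nat \<Rightarrow> nat" where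
  "nth_prime k = (LEAST p. prime p \<and> card {q. prime q \<and> q \<le> p} = k)"

definition max_prime_gap :: "nat \<Rightarrow> nat \<Rightarrow> nat" where
  "max_prime_gap a b = Max {q' - q | q q'. prime q \<and> prime q' \<and> a \<le> q \<and> q < q' \<and> q' \<le> b
       \<and> (\<forall>m. q < m \<and> m < q' \<longrightarrow> \<not> prime m)}"

text \<open>d(p_{r+1}^2) from the paper, as a function of r.\<close>
definition d_sq :: "nat \<Rightarrow> nat" where
  "d_sq r = max_prime_gap (nth_prime (r + 1)) ((nth_prime (r + 1))^2)"

end

theory Submission
  imports Defs "HOL.Binomial_Plus"
begin


lemma suc_div: "0 < (d::nat) \<Longrightarrow> Suc m div d = m div d + (if d dvd Suc m then 1 else 0)"
  by (simp add: div_Suc mod_eq_0_iff_dvd)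

lemma mult_lt: assumes "prime (q::nat)" "0 < k" shows "multiplicity q k < k"
proof -
  let ?e = "multiplicity q k"
  have "q ^ ?e dvd k" by (simp add: multiplicity_dvd)
  hence "q ^ ?e \<le> k" using assms(2) by (simp add: dvd_imp_le)
  moreover have "?e < 2 ^ ?e" by (rule less_exp)
  moreover have "2 ^ ?e \<le> q ^ ?e" using prime_ge_2_nat[OF assms(1)] by (intro power_mono) auto
  ultimately show ?thesis by linarith
qed

lemma legendre:
  assumes "prime (q::nat)"
  shows "multiplicity q (fact m) = (\<Sum>i\<in>{1..m}. m div q ^ i)"
proof (induction m)
  case 0 then show ?case by simp
next
  case (Suc m)
  have qp: "0 < q ^ i" for i using prime_gt_0_nat[OF assms] by simp
  have "multiplicity q (fact (Suc m)) = multiplicity q (Suc m) + multiplicity q (fact m :: nat)"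
    by (simp only: fact_Suc of_nat_id, rule prime_elem_multiplicity_mult_distrib) (use assms in auto)
  also have "multiplicity q (Suc m) = card {i\<in>{1..Suc m}. q ^ i dvd Suc m}"
  proof -
    have "{i\<in>{1..Suc m}. q ^ i dvd Suc m} = {1..multiplicity q (Suc m)}"
    proof -
      have "q ^ i dvd Suc m \<longleftrightarrow> i \<le> multiplicity q (Suc m)" for i
        by (rule power_dvd_iff_le_multiplicity) (use assms in auto)
      hence "{i\<in>{1..Suc m}. q ^ i dvd Suc m} = {i\<in>{1..Suc m}. i \<le> multiplicity q (Suc m)}" by simp
      also have "\<dots> = {1..multiplicity q (Suc m)}" using mult_lt[OF assms, of "Suc m"] by auto
      finally show ?thesis .
    qed
    thus ?thesis by simp
  qed
  also have "card {i\<in>{1..Suc m}. q ^ i dvd Suc m} = (\<Sum>i\<in>{1..Suc m}. if q ^ i dvd Suc m then 1 else 0)"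
    using sum.inter_filter[of "{1..Suc m}" "\<lambda>_. 1::nat" "\<lambda>i. q^i dvd Suc m"] by simp
  also have "multiplicity q (fact m :: nat) = (\<Sum>i\<in>{1..Suc m}. m div q ^ i)"
  proof -
    have "m div q ^ Suc m = 0"
    proof -
      have "m < 2 * 2 ^ m" using less_exp[of m] by linarith
      hence "m < 2 ^ Suc m" by simp
      also have "2 ^ Suc m \<le> q ^ Suc m" using prime_ge_2_nat[OF assms] by (intro power_mono) auto
      finally show ?thesis by simp
    qed
    thus ?thesis using Suc.IH by simp
  qed
  also have "(\<Sum>i\<in>{1..Suc m}. if q ^ i dvd Suc m then 1 else 0) + (\<Sum>i\<in>{1..Suc m}. m div q ^ i)
      = (\<Sum>i\<in>{1..Suc m}. Suc m div q ^ i)"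
    by (simp add: sum.distrib[symmetric] suc_div[OF qp] add.commute)
  finally show ?case .
qed

lemma term_bound: "(2*n) div (d::nat) \<le> 2 * (n div d) + (if d \<le> 2*n then 1 else 0)"
proof (cases "d \<le> 2*n")
  case True
  have "(2*n) div d \<le> 2 * (n div d) + 1"
  proof (cases "d = 0")
    case False
    have a: "n mod d < d" using False by simp
    have e: "n = (n div d)*d + n mod d" by simp
    have f: "(2 * (n div d) + 2) * d = 2*((n div d)*d) + 2*d" by (simp add: algebra_simps)
    have "2*n < (2 * (n div d) + 2) * d" using a e f by linarith
    hence "(2*n) div d < 2 * (n div d) + 2" using False by (simp add: div_less_iff_less_mult)
    thus ?thesis by simp
  qed simp
  thus ?thesis using True by simp
next
  case False thus ?thesis by simp
qed



lemma sum_ext_zero: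
  assumes "prime (q::nat)" shows "(\<Sum>i\<in>{1..n}. n div q ^ i) = (\<Sum>i\<in>{1..2*n}. n div q ^ i)"
proof -
  have z: "n div q ^ i = 0" if "i > n" for i
  proof -
    have "n < 2 ^ n" by (rule less_exp)
    also have "(2::nat) ^ n \<le> 2 ^ i" using that by (simp add: power_increasing)
    also have "2 ^ i \<le> q ^ i" using prime_ge_2_nat[OF assms] by (intro power_mono) auto
    finally show ?thesis by simp
  qed
  have "{1..2*n} = {1..n} \<union> {n<..2*n}" by auto
  hence "(\<Sum>i\<in>{1..2*n}. n div q ^ i) = (\<Sum>i\<in>{1..n}. n div q ^ i) + (\<Sum>i\<in>{n<..2*n}. n div q ^ i)"
    by (simp add: sum.union_disjoint ivl_disj_int)
  moreover have "(\<Sum>i\<in>{n<..2*n}. n div q ^ i) = 0" using z by simp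
  ultimately show ?thesis by simp
qed

lemma mult_binom_bound:
  assumes "prime (q::nat)" "n \<ge> 1"
  shows "q ^ multiplicity q ((2*n) choose n) \<le> 2*n"
proof (rule ccontr)
  define v where "v = multiplicity q ((2*n) choose n)"
  assume "\<not> q ^ multiplicity q ((2*n) choose n) \<le> 2*n"
  hence big: "2*n < q ^ v" unfolding v_def by simp
  have C0: "((2*n) choose n) \<noteq> 0" by simp
  have "fact n * fact n * ((2*n) choose n) = (fact (2*n) :: nat)"
    using binomial_fact_lemma[of n "2*n"] by simp
  have "multiplicity q (fact (2*n) :: nat) = multiplicity q (fact n :: nat) + multiplicity q (fact n :: nat) + v"
  proof -
    have pe: "prime_elem q" using assms(1) by simp
    have "multiplicity q (fact n * fact n * ((2*n) choose n) :: nat) = multiplicity q (fact n * fact n :: nat) + v"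
      unfolding v_def by (rule prime_elem_multiplicity_mult_distrib[OF pe]) (use C0 in auto)
    also have "multiplicity q (fact n * fact n :: nat) = multiplicity q (fact n :: nat) + multiplicity q (fact n :: nat)"
      by (rule prime_elem_multiplicity_mult_distrib[OF pe]) auto
    finally show ?thesis using \<open>fact n * fact n * ((2*n) choose n) = (fact (2*n) :: nat)\<close> by simp
  qed
  hence eq: "(\<Sum>i\<in>{1..2*n}. (2*n) div q ^ i) = (\<Sum>i\<in>{1..2*n}. 2 * (n div q ^ i)) + v"
    using legendre[OF assms(1), of "2*n"] legendre[OF assms(1), of n] sum_ext_zero[OF assms(1), of n]
    by (simp add: sum_distrib_left[symmetric])
  have "(\<Sum>i\<in>{1..2*n}. (2*n) div q ^ i) \<le> (\<Sum>i\<in>{1..2*n}. 2 * (n div q ^ i) + (if q ^ i \<le> 2*n then 1 else 0))"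
    by (rule sum_mono) (rule term_bound)
  also have "\<dots> = (\<Sum>i\<in>{1..2*n}. 2 * (n div q ^ i)) + card {i\<in>{1..2*n}. q ^ i \<le> 2*n}"
    by (simp add: sum.distrib sum.If_cases Int_def conj_commute)
  finally have "v \<le> card {i\<in>{1..2*n}. q ^ i \<le> 2*n}" using eq by simp
  moreover have "{i\<in>{1..2*n}. q ^ i \<le> 2*n} \<subseteq> {1..v-1}"
  proof
    fix i assume "i \<in> {i\<in>{1..2*n}. q ^ i \<le> 2*n}"
    hence qi: "q ^ i < q ^ v" "i \<ge> 1" using big by auto
    have "i < v" by (rule power_less_imp_less_exp[OF prime_gt_1_nat[OF assms(1)] qi(1)])
    thus "i \<in> {1..v-1}" using \<open>i \<ge> 1\<close> by auto
  qed
  hence "card {i\<in>{1..2*n}. q ^ i \<le> 2*n} \<le> card {1..v-1}" by (intro card_mono) auto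
  hence "card {i\<in>{1..2*n}. q ^ i \<le> 2*n} \<le> v - 1" by simp
  moreover have "v \<ge> 1" using big assms(2) by (cases v) auto
  ultimately show False by linarith
qed

lemma binom_upper:
  assumes "n \<ge> 1" "\<forall>q. prime q \<and> q \<le> 2*n \<longrightarrow> q \<le> x"
  shows "((2*n) choose n) \<le> (2*n) ^ x"
proof -
  let ?C = "(2*n) choose n"
  have C0: "?C > 0" by simp
  have sub: "prime_factors ?C \<subseteq> {2..x}"
  proof
    fix p assume p: "p \<in> prime_factors ?C"
    hence pp: "prime p" "p dvd ?C" by auto
    have "?C dvd (fact (2*n) :: nat)"
      using binomial_fact_lemma[of n "2*n"] by (metis dvd_triv_right le_add2 mult_2 add_diff_cancel_left')
    hence "p dvd (fact (2*n) :: nat)" using pp(2) by (rule dvd_trans[rotated])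
    hence "p \<le> 2*n" using prime_dvd_fact_iff[OF pp(1)] by simp
    thus "p \<in> {2..x}" using assms(2) pp(1) prime_ge_2_nat by auto
  qed
  have "?C = (\<Prod>p\<in>prime_factors ?C. p ^ multiplicity p ?C)" by (rule prime_factorization_nat[OF C0])
  also have "\<dots> \<le> (\<Prod>p\<in>prime_factors ?C. 2*n)"
    by (rule prod_mono) (auto intro: mult_binom_bound[OF _ assms(1)])
  also have "\<dots> = (2*n) ^ card (prime_factors ?C)" by simp
  also have "\<dots> \<le> (2*n) ^ x"
  proof -
    have "card (prime_factors ?C) \<le> card {2..x}" using sub by (intro card_mono) auto
    also have "\<dots> \<le> x" by simp
    finally show ?thesis using assms(1) by (intro power_increasing) auto
  qed
  finally show ?thesis .
qed



lemma pow5: "x \<ge> 25 \<Longrightarrow> (x::nat)^5 \<le> 2^x"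
proof (induction x rule: dec_induct)
  case base then show ?case by simp
next
  case (step x)
  have "25 * (Suc x) \<le> 26 * x" using step(1) by simp
  hence "(25 * Suc x)^5 \<le> (26*x)^5" by (rule power_mono) simp
  hence "25^5 * (Suc x)^5 \<le> 26^5 * x^5" by (simp only: power_mult_distrib)
  hence "(Suc x)^5 \<le> 2 * x^5" by simp
  also have "\<dots> \<le> 2 * 2^x" using step(3) by simp
  finally show ?case by simp
qed

lemma p29: "prime (29::nat)" "prime (23::nat)" "prime (19::nat)" "prime (17::nat)" "prime (13::nat)" "prime (11::nat)" "prime (7::nat)" "prime (5::nat)" "prime (3::nat)"
  by (simp_all add: prime_nat_iff' atLeastLessThan_nat_numeral)

lemma weak_bertrand_big:
  assumes x: "(x::nat) \<ge> 25"
  shows "\<exists>q. prime q \<and> x < q \<and> q \<le> x^2"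
proof (rule ccontr)
  assume H: "\<not> ?thesis"
  define n where "n = x^2 div 2"
  have n2: "x^2 \<le> 2*n + 1" "2*n \<le> x^2" unfolding n_def by auto
  have "(25::nat)^2 \<le> x^2" using x by (rule power_mono) simp
  hence "625 \<le> x^2" by simp
  hence n1: "n \<ge> 1" using n2 by linarith
  have "\<forall>q. prime q \<and> q \<le> 2*n \<longrightarrow> q \<le> x"
  proof (intro allI impI)
    fix q assume q: "prime q \<and> q \<le> 2*n"
    show "q \<le> x"
    proof (rule ccontr)
      assume "\<not> q \<le> x"
      hence "prime q \<and> x < q \<and> q \<le> x^2" using q n2(2) by linarith
      thus False using H by blast
    qed
  qed
  hence up: "((2*n) choose n) \<le> (2*n) ^ x" by (rule binom_upper[OF n1])
  have "4^n / (2*real n) \<le> real ((2*n) choose n)" using n1 by (intro central_binomial_lower_bound) simp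
  moreover have "(0::real) < 2 * real n" using n1 by simp
  ultimately have "(4::real)^n \<le> real ((2*n) choose n) * (2 * real n)" by (simp add: pos_divide_le_eq)
  hence "(4::real)^n \<le> 2 * real n * real ((2*n) choose n)" by (simp add: mult.commute)
  hence "(4::nat)^n \<le> 2 * n * ((2*n) choose n)" by (metis of_nat_le_iff of_nat_mult of_nat_numeral of_nat_power)
  also have "\<dots> \<le> 2 * n * (2*n)^x" using up by simp
  also have "\<dots> = (2*n)^(x+1)" by simp
  also have "\<dots> \<le> (x^2)^(x+1)" using n2 by (intro power_mono) auto
  finally have a0: "(4::nat)^n \<le> (x^2)^(x+1)" .
  have "(2::nat)^(2*n) = 4^n" by (simp add: power_mult)
  moreover have "x^(2*x+2) = (x^2)^(x+1)"
  proof -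
    have "2*x+2 = 2*(x+1)" by simp
    thus ?thesis by (simp only: power_mult)
  qed
  ultimately have a: "(2::nat)^(2*n) \<le> x^(2*x+2)" using a0 by simp
  have "(2::nat)^(10*n) = ((2::nat)^(2*n))^5" by (simp add: power_mult[symmetric])
  also have "\<dots> \<le> (x^(2*x+2))^5" using a by (rule power_mono) simp
  also have "\<dots> = (x^5)^(2*x+2)" by (metis power_mult mult.commute)
  also have "\<dots> \<le> (2^x)^(2*x+2)" using pow5[OF x] by (rule power_mono) simp
  also have "\<dots> = 2^(x*(2*x+2))" by (simp only: power_mult)
  finally have "10*n \<le> x*(2*x+2)" by simp
  moreover have "x * (2*x+2) = 2*(x*x) + 2*x" by (simp add: algebra_simps)
  moreover have "x * x \<ge> 25 * x" using x by (intro mult_right_mono) auto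
  moreover have "x * x \<le> 2*n+1" using n2(1) by (simp add: power2_eq_square)
  ultimately show False using x by linarith
qed

lemma weak_bertrand:
  assumes x: "(x::nat) \<ge> 2"
  shows "\<exists>q. prime q \<and> x < q \<and> q \<le> x^2"
proof -
  have sq: "a * a \<le> x^2" if "a \<le> x" for a using that by (simp add: power2_eq_square mult_le_mono)
  show ?thesis
  proof (cases "x \<ge> 25")
    case True thus ?thesis by (rule weak_bertrand_big)
  next
    case False
    have w: "\<exists>q. prime q \<and> x < q \<and> q \<le> a * a" if "prime q" "x < q" "q \<le> a * a" "a \<le> x" for q a
      using that by blast
    show ?thesis
    proof -
      have "x \<le> 2 \<or> (3 \<le> x \<and> x \<le> 4) \<or> (5 \<le> x \<and> x \<le> 6) \<or> (7 \<le> x \<and> x \<le> 10) \<or>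
        (11 \<le> x \<and> x \<le> 12) \<or> (13 \<le> x \<and> x \<le> 16) \<or> (17 \<le> x \<and> x \<le> 18) \<or>
        (19 \<le> x \<and> x \<le> 22) \<or> (23 \<le> x \<and> x \<le> 24)" using False by linarith
      thus ?thesis
      proof (elim disjE conjE)
        assume "x \<le> 2" thus ?thesis using x p29 sq[of 2] by (intro exI[of _ 3]) auto
      next assume "3 \<le> x" "x \<le> 4" thus ?thesis using p29 sq[of 3] by (intro exI[of _ 5]) auto
      next assume "5 \<le> x" "x \<le> 6" thus ?thesis using p29 sq[of 5] by (intro exI[of _ 7]) auto
      next assume "7 \<le> x" "x \<le> 10" thus ?thesis using p29 sq[of 7] by (intro exI[of _ 11]) auto
      next assume "11 \<le> x" "x \<le> 12" thus ?thesis using p29 sq[of 11] by (intro exI[of _ 13]) auto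
      next assume "13 \<le> x" "x \<le> 16" thus ?thesis using p29 sq[of 13] by (intro exI[of _ 17]) auto
      next assume "17 \<le> x" "x \<le> 18" thus ?thesis using p29 sq[of 17] by (intro exI[of _ 19]) auto
      next assume "19 \<le> x" "x \<le> 22" thus ?thesis using p29 sq[of 19] by (intro exI[of _ 23]) auto
      next assume "23 \<le> x" "x \<le> 24" thus ?thesis using p29 sq[of 23] by (intro exI[of _ 29]) auto
      qed
    qed
  qed
qed



definition cnt :: "nat \<Rightarrow> nat" where "cnt p = card {q. prime q \<and> q \<le> p}"

lemma cnt_finite: "finite {q::nat. prime q \<and> q \<le> p}"
  by (rule finite_subset[of _ "{..p}"]) auto

lemma nth_prime_cnt:
  assumes "prime p" shows "nth_prime (cnt p) = p"
  unfolding nth_prime_def cnt_def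
proof (rule Least_equality)
  show "prime p \<and> card {q. prime q \<and> q \<le> p} = card {q. prime q \<and> q \<le> p}" using assms by simp
next
  fix y :: nat assume y: "prime y \<and> card {q. prime q \<and> q \<le> y} = card {q. prime q \<and> q \<le> p}"
  show "p \<le> y"
  proof (rule ccontr)
    assume "\<not> p \<le> y"
    hence "{q. prime q \<and> q \<le> y} \<subset> {q. prime q \<and> q \<le> p}" using assms by auto
    hence "card {q. prime q \<and> q \<le> y} < card {q. prime q \<and> q \<le> p}"
      by (rule psubset_card_mono[OF cnt_finite])
    thus False using y by simp
  qed
qed

lemma cnt_succ:
  assumes "prime Q" "prime P" "Q < P" "\<forall>s. Q < s \<and> s < P \<longrightarrow> \<not> prime s"
  shows "cnt P = Suc (cnt Q)"
proof -
  have "{q. prime q \<and> q \<le> P} = insert P {q. prime q \<and> q \<le> Q}"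
  proof (intro set_eqI iffI)
    fix x assume x: "x \<in> {q. prime q \<and> q \<le> P}"
    show "x \<in> insert P {q. prime q \<and> q \<le> Q}"
    proof (cases "x = P")
      case False
      hence "x < P" using x by auto
      hence "x \<le> Q" using assms(4) x by (simp add: not_le[symmetric]) blast
      thus ?thesis using x by auto
    qed simp
  qed (use assms in auto)
  moreover have "P \<notin> {q. prime q \<and> q \<le> Q}" using assms(3) by auto
  ultimately show ?thesis unfolding cnt_def using cnt_finite by simp
qed

lemma cnt_pos: "prime Q \<Longrightarrow> cnt Q \<ge> 1"
  unfolding cnt_def using cnt_finite[of Q]
  by (metis (mono_tags, lifting) One_nat_def Suc_leI card_gt_0_iff empty_iff mem_Collect_eq order_refl)

lemma final_arith:
  fixes m q q' Qm :: nat
  assumes "Qm^2 < q'" "q' \<le> q + 2*Qm" "q + 1 \<le> m^2" "(m+1)^2 \<le> q'"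
  shows False
proof (cases "Qm \<le> m")
  case True
  hence "q' \<le> m^2 - 1 + 2*m" using assms(2,3) by linarith
  moreover have "(m+1)^2 = m^2 + 2*m + 1" by (simp add: power2_eq_square algebra_simps)
  ultimately show False using assms(4) by linarith
next
  case False
  hence "int m \<le> int Qm - 1" by simp
  hence "(int m)^2 \<le> (int Qm - 1)^2" by (intro power_mono) auto
  hence "(int m)^2 \<le> (int Qm)^2 - 2 * int Qm + 1" by (simp add: power2_diff)
  moreover have "int Qm ^2 < int q'" using assms(1) by (metis of_nat_less_iff of_nat_power)
  moreover have "int q' \<le> int q + 2 * int Qm" using assms(2) by linarith
  moreover have "int q + 1 \<le> (int m)^2" using assms(3) by (metis of_nat_1 of_nat_add of_nat_le_iff of_nat_power)
  ultimately show False by linarith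
qed



theorem mainTheorem3:
  assumes "\<forall>r::nat. r \<ge> 1 \<longrightarrow> d_sq r \<le> 2 * nth_prime r"
  shows "\<forall>n::nat. n \<ge> 1 \<longrightarrow> (\<exists>p. prime p \<and> n^2 < p \<and> p < (n + 1)^2)"
proof (intro allI impI)
  fix m :: nat assume m1: "m \<ge> 1"
  show "\<exists>p. prime p \<and> m^2 < p \<and> p < (m + 1)^2"
  proof (cases "m = 1")
    case True thus ?thesis by (intro exI[of _ 2]) (auto simp: power2_eq_square)
  next
    case False
    hence m2: "m \<ge> 2" using m1 by simp
    show ?thesis
    proof (rule ccontr)
      assume N: "\<not> ?thesis"
      have "(2::nat)^2 \<le> m^2" using m2 by (intro power_mono) auto
      hence m4: "4 \<le> m^2" by simp
      define S where "S = {r::nat. prime r \<and> r \<le> m^2}"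
      have Sfin: "finite S" unfolding S_def by (rule finite_subset[of _ "{..m^2}"]) auto
      have "2 \<in> S" unfolding S_def using m4 by simp
      hence Sne: "S \<noteq> {}" by auto
      define q where "q = Max S"
      have "q \<in> S" unfolding q_def using Sfin Sne by (rule Max_in)
      hence qp: "prime q" and qle: "q \<le> m^2" unfolding S_def by auto
      have qmax: "r \<le> q" if "r \<in> S" for r unfolding q_def using Sfin that by simp
      have "q \<noteq> m^2" using qp by (auto simp: prime_power_iff)
      hence qlt: "q + 1 \<le> m^2" using qle by simp
      obtain r where r: "prime r" "q < r" "r \<le> q^2" using weak_bertrand[of q] prime_ge_2_nat[OF qp] by blast
      define q' where "q' = (LEAST r. prime r \<and> q < r)"
      have q'p: "prime q' \<and> q < q'" unfolding q'_def
        by (rule LeastI[of "\<lambda>r. prime r \<and> q < r" r]) (use r in simp)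
      have q'le: "q' \<le> r" unfolding q'_def using r by (intro Least_le) auto
      have gapfree: "\<forall>s. q < s \<and> s < q' \<longrightarrow> \<not> prime s"
        unfolding q'_def using not_less_Least by blast
      have "q' > m^2"
      proof (rule ccontr)
        assume "\<not> q' > m^2"
        hence "q' \<in> S" unfolding S_def using q'p by auto
        hence "q' \<le> q" by (rule qmax)
        thus False using q'p by simp
      qed
      hence q'big: "(m+1)^2 \<le> q'" using N q'p by (meson not_le)
      define T where "T = {P::nat. prime P \<and> P \<le> q \<and> q' \<le> P^2}"
      have "q \<in> T" unfolding T_def using qp q'le r by auto
      define P where "P = (LEAST P. P \<in> T)"
      have PT: "P \<in> T" unfolding P_def using \<open>q \<in> T\<close> by (rule LeastI)
      hence Pp: "prime P" and Pq: "P \<le> q" and Psq: "q' \<le> P^2" unfolding T_def by auto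
      have "(3::nat)^2 \<le> (m+1)^2" using m2 by (intro power_mono) auto
      hence "9 \<le> q'" using q'big by simp
      hence "P \<noteq> 2" using Psq by auto
      hence P3: "P \<ge> 3" using prime_ge_2_nat[OF Pp] by simp
      define U where "U = {Q::nat. prime Q \<and> Q < P}"
      have Ufin: "finite U" unfolding U_def by (rule finite_subset[of _ "{..P}"]) auto
      have "2 \<in> U" unfolding U_def using P3 by simp
      hence Une: "U \<noteq> {}" by auto
      define Qm where "Qm = Max U"
      have "Qm \<in> U" unfolding Qm_def using Ufin Une by (rule Max_in)
      hence Qp: "prime Qm" and QP: "Qm < P" unfolding U_def by auto
      have Qgap: "\<forall>s. Qm < s \<and> s < P \<longrightarrow> \<not> prime s"
      proof (intro allI impI)
        fix s assume s: "Qm < s \<and> s < P"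
        show "\<not> prime s"
        proof
          assume "prime s"
          hence "s \<in> U" unfolding U_def using s by auto
          hence "s \<le> Qm" unfolding Qm_def using Ufin by simp
          thus False using s by simp
        qed
      qed
      have "Qm \<notin> T" unfolding P_def using QP not_less_Least P_def by blast
      hence Qsq: "Qm^2 < q'" unfolding T_def using Qp QP Pq by auto
      define t where "t = cnt Qm"
      have t1: "t \<ge> 1" unfolding t_def by (rule cnt_pos[OF Qp])
      have ntQ: "nth_prime t = Qm" unfolding t_def by (rule nth_prime_cnt[OF Qp])
      have "cnt P = Suc t" unfolding t_def by (rule cnt_succ[OF Qp Pp QP Qgap])
      hence ntP: "nth_prime (t+1) = P" using nth_prime_cnt[OF Pp] by simp
      have hyp: "d_sq t \<le> 2 * Qm" using assms t1 ntQ by auto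
      define G where "G = {b - a | a b. prime a \<and> prime b \<and> P \<le> a \<and> a < b \<and> b \<le> P^2
       \<and> (\<forall>s. a < s \<and> s < b \<longrightarrow> \<not> prime s)}"
      have dG: "d_sq t = Max G" unfolding d_sq_def max_prime_gap_def G_def ntP by simp
      have Gfin: "finite G"
      proof (rule finite_subset[of _ "{..P^2}"])
        show "G \<subseteq> {..P^2}" unfolding G_def by auto
      qed simp
      have "q' - q \<in> G" unfolding G_def using qp q'p Pq Psq gapfree by blast
      hence "q' - q \<le> Max G" using Gfin by simp
      hence "q' - q \<le> 2 * Qm" using dG hyp by simp
      hence "q' \<le> q + 2 * Qm" by simp
      thus False using final_arith[OF Qsq _ qlt q'big] by blast
    qed
  qed
qed


end
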